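(* For $\theta \in \mathrm{Aut}(\mathbb{F}_{p^m})$, $\eta_1 \in \mathbb{F}_{p^m}^*$, and $\eta_i \in 1 + u^{i-1}\mathbb{F}_{p^m}$ for $2 \le i \le k-1$, define \[ \Theta_{\theta,\eta_1,\dots,\eta_{k-1}} : R_k \to R_k,\qquad \sum_{i=0}^{k-1} a_i u^i \longmapsto \sum_{i=0}^{k-1} \theta(a_i)\Big(\prod_{j=1}^{k-1}\eta_j\Big)^{i} u^i \quad (a_i\in\mathbb{F}_{p^m}). \] Then each $\Theta_{\theta,\eta_1,\dots,\eta_{k-1}}$ is a ring automorphism of $R_k$, and \[ \mathrm{Aut}(R_k)=\{\Theta_{\theta,\eta_1,\dots,\eta_{k-1}} : \theta\in\mathrm{Aut}(\mathbb{F}_{p^m}),\ \eta_1\in\mathbb{F}_{p^m}^*,\ \eta_i\in 1+u^{i-1}\mathbb{F}_{p^m}\ (2\le i\le k-1)\}. \]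
   Context: Let $p$ be a prime, $m,k\ge 1$, $\mathbb{F}_{p^m}$ the finite field with $p^m$ elements, and $R_k=\mathbb{F}_{p^m}[u]/\langle u^k\rangle=\mathbb{F}_{p^m}+u\mathbb{F}_{p^m}+\dots+u^{k-1}\mathbb{F}_{p^m}$ with $u^k=0$. $\mathbb{F}_{p^m}^*$ denotes the nonzero elements of $\mathbb{F}_{p^m}$. *)

theory Defs
  imports "HOL-Algebra.Algebra" "HOL-Computational_Algebra.Primes"
begin

definition Fring :: "('a::field) ring" where
  "Fring = \<lparr>carrier = UNIV, monoid.mult = (*), one = 1, ring.zero = 0, ring.add = (+)\<rparr>"

text \<open>R_k = F[u]/<u^k>: an element sum_{i<k} a_i u^i is represented by its coefficient
  function a :: nat => 'a, with a i = 0 for i >= k.  Multiplication is the truncated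
  convolution (u^k = 0).\<close>
definition Rk :: "nat \<Rightarrow> (nat \<Rightarrow> 'a::field) ring" where
  "Rk k = \<lparr>carrier = {a. \<forall>i\<ge>k. a i = 0},
           monoid.mult = (\<lambda>a b i. if i < k then (\<Sum>j\<le>i. a j * b (i - j)) else 0),
           one = (\<lambda>i. if i = 0 \<and> 0 < k then 1 else 0),
           ring.zero = (\<lambda>i. 0),
           ring.add = (\<lambda>a b i. a i + b i)\<rparr>"

definition Rk_const :: "nat \<Rightarrow> 'a::field \<Rightarrow> (nat \<Rightarrow> 'a)" where
  "Rk_const k c = (\<lambda>i. if i = 0 \<and> 0 < k then c else 0)"

definition Rk_u :: "nat \<Rightarrow> (nat \<Rightarrow> 'a::field)" where
  "Rk_u k = (\<lambda>i. if i = 1 \<and> 1 < k then 1 else 0)"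

definition admissible :: "nat \<Rightarrow> ('a::field \<Rightarrow> 'a) \<Rightarrow> (nat \<Rightarrow> nat \<Rightarrow> 'a) \<Rightarrow> bool" where
  "admissible k \<theta> \<eta> \<longleftrightarrow>
     \<theta> \<in> ring_iso Fring Fring \<and>
     (\<exists>e. e \<noteq> 0 \<and> \<eta> 1 = Rk_const k e) \<and>
     (\<forall>i. 2 \<le> i \<and> i \<le> k - 1 \<longrightarrow>
        (\<exists>c. \<eta> i = \<one>\<^bsub>Rk k\<^esub> \<oplus>\<^bsub>Rk k\<^esub>
                    (Rk_const k c \<otimes>\<^bsub>Rk k\<^esub> (Rk_u k [^]\<^bsub>Rk k\<^esub> (i - 1)))))"

definition Theta :: "nat \<Rightarrow> ('a::field \<Rightarrow> 'a) \<Rightarrow> (nat \<Rightarrow> nat \<Rightarrow> 'a) \<Rightarrow> (nat \<Rightarrow> 'a) \<Rightarrow> (nat \<Rightarrow> 'a)" where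
  "Theta k \<theta> \<eta> a =
     (let P = finprod (Rk k) \<eta> {1..k-1} in
      finsum (Rk k) (\<lambda>i. Rk_const k (\<theta> (a i)) \<otimes>\<^bsub>Rk k\<^esub> (P [^]\<^bsub>Rk k\<^esub> i)
                        \<otimes>\<^bsub>Rk k\<^esub> (Rk_u k [^]\<^bsub>Rk k\<^esub> i)) {..<k})"

end

theory Submission
  imports Defs "HOL-Computational_Algebra.Formal_Power_Series" "HOL-Number_Theory.Residues"
begin
unbundle fps_syntax

definition rkT :: "nat \<Rightarrow> 'a::field fps \<Rightarrow> (nat \<Rightarrow> 'a)" where
  "rkT k f = (\<lambda>i. if i < k then f $ i else 0)"

lemma carrier_Rk [simp]: "carrier (Rk k) = {a. \<forall>i\<ge>k. a i = 0}"
  by (simp add: Rk_def)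

lemma mult_Rk: "a \<otimes>\<^bsub>Rk k\<^esub> b = (\<lambda>i. if i < k then (\<Sum>j\<le>i. a j * b (i - j)) else 0)"
  by (simp add: Rk_def)

lemma add_Rk: "a \<oplus>\<^bsub>Rk k\<^esub> b = (\<lambda>i. a i + b i)"
  by (simp add: Rk_def)

lemma one_Rk: "\<one>\<^bsub>Rk k\<^esub> = (\<lambda>i. if i = 0 \<and> 0 < k then 1 else 0)"
  by (simp add: Rk_def)

lemma zero_Rk: "\<zero>\<^bsub>Rk k\<^esub> = (\<lambda>i. 0)"
  by (simp add: Rk_def)

lemma rkT_hi [simp]: "k \<le> i \<Longrightarrow> rkT k f i = 0"
  by (simp add: rkT_def)

lemma rkT_carrier [simp]: "rkT k f \<in> carrier (Rk k)"
  by (simp add: rkT_def)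

lemma rkT_E: "x \<in> carrier (Rk k) \<Longrightarrow> rkT k (Abs_fps x) = x"
  by (auto simp: rkT_def fun_eq_iff)

lemma rkT_eq_iff: "rkT k f = rkT k g \<longleftrightarrow> (\<forall>i<k. f $ i = g $ i)"
  by (auto simp: rkT_def fun_eq_iff)

lemma rkT_mult: "rkT k f \<otimes>\<^bsub>Rk k\<^esub> rkT k g = rkT k (f * g)"
  by (auto simp: rkT_def mult_Rk fun_eq_iff fps_mult_nth atLeast0AtMost intro!: sum.cong)

lemma rkT_add: "rkT k f \<oplus>\<^bsub>Rk k\<^esub> rkT k g = rkT k (f + g)"
  by (auto simp: rkT_def add_Rk fun_eq_iff)

lemma rkT_one: "\<one>\<^bsub>Rk k\<^esub> = rkT k 1"
  by (auto simp: rkT_def one_Rk fun_eq_iff)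

lemma rkT_zero: "\<zero>\<^bsub>Rk k\<^esub> = rkT k 0"
  by (auto simp: rkT_def zero_Rk fun_eq_iff)

lemma rkT_ex: "x \<in> carrier (Rk k) \<Longrightarrow> \<exists>f. x = rkT k f"
  using rkT_E by metis

lemma Rk_cring: "cring (Rk k :: (nat \<Rightarrow> 'a::field) ring)"
proof (rule cringI)
  show "abelian_group (Rk k :: (nat \<Rightarrow> 'a::field) ring)"
  proof (rule abelian_groupI)
    fix x y z :: "nat \<Rightarrow> 'a"
    assume x: "x \<in> carrier (Rk k)" and y: "y \<in> carrier (Rk k)" and z: "z \<in> carrier (Rk k)"
    show "x \<oplus>\<^bsub>Rk k\<^esub> y \<in> carrier (Rk k)" using x y by (simp add: add_Rk)
    show "x \<oplus>\<^bsub>Rk k\<^esub> y \<oplus>\<^bsub>Rk k\<^esub> z = x \<oplus>\<^bsub>Rk k\<^esub> (y \<oplus>\<^bsub>Rk k\<^esub> z)" by (simp add: add_Rk add.assoc)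
    show "x \<oplus>\<^bsub>Rk k\<^esub> y = y \<oplus>\<^bsub>Rk k\<^esub> x" by (simp add: add_Rk add.commute)
  next
    fix x :: "nat \<Rightarrow> 'a" assume x: "x \<in> carrier (Rk k)"
    show "\<zero>\<^bsub>Rk k\<^esub> \<oplus>\<^bsub>Rk k\<^esub> x = x" by (simp add: add_Rk zero_Rk)
    show "\<exists>y\<in>carrier (Rk k). y \<oplus>\<^bsub>Rk k\<^esub> x = \<zero>\<^bsub>Rk k\<^esub>"
      using x by (intro bexI[of _ "\<lambda>i. - x i"]) (auto simp: add_Rk zero_Rk)
  qed (simp add: zero_Rk)
next
  show "comm_monoid (Rk k :: (nat \<Rightarrow> 'a::field) ring)"
  proof (rule comm_monoidI)
    fix x y z :: "nat \<Rightarrow> 'a"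
    assume x: "x \<in> carrier (Rk k)" and y: "y \<in> carrier (Rk k)" and z: "z \<in> carrier (Rk k)"
    obtain f g h where f: "x = rkT k f" and g: "y = rkT k g" and h: "z = rkT k h"
      using rkT_ex x y z by metis
    show "x \<otimes>\<^bsub>Rk k\<^esub> y \<in> carrier (Rk k)" by (simp add: f g rkT_mult)
    show "x \<otimes>\<^bsub>Rk k\<^esub> y \<otimes>\<^bsub>Rk k\<^esub> z = x \<otimes>\<^bsub>Rk k\<^esub> (y \<otimes>\<^bsub>Rk k\<^esub> z)"
      by (simp add: f g h rkT_mult mult.assoc)
    show "x \<otimes>\<^bsub>Rk k\<^esub> y = y \<otimes>\<^bsub>Rk k\<^esub> x" by (simp add: f g rkT_mult mult.commute)
    show "\<one>\<^bsub>Rk k\<^esub> \<otimes>\<^bsub>Rk k\<^esub> x = x" by (simp add: f rkT_one rkT_mult)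
  qed (simp add: rkT_one)
next
  fix x y z :: "nat \<Rightarrow> 'a"
  assume x: "x \<in> carrier (Rk k)" and y: "y \<in> carrier (Rk k)" and z: "z \<in> carrier (Rk k)"
  obtain f g h where f: "x = rkT k f" and g: "y = rkT k g" and h: "z = rkT k h"
    using rkT_ex x y z by metis
  show "(x \<oplus>\<^bsub>Rk k\<^esub> y) \<otimes>\<^bsub>Rk k\<^esub> z = x \<otimes>\<^bsub>Rk k\<^esub> z \<oplus>\<^bsub>Rk k\<^esub> y \<otimes>\<^bsub>Rk k\<^esub> z"
    by (simp add: f g h rkT_mult rkT_add distrib_right)
qed


lemma Rk_monoid: "monoid (Rk k :: (nat \<Rightarrow> 'a::field) ring)"
  using Rk_cring[where 'a='a] by (simp add: cring_def ring_def)

lemma rkT_pow: "rkT k f [^]\<^bsub>Rk k\<^esub> (n::nat) = rkT k (f ^ n)"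
proof (induction n)
  case 0
  then show ?case using monoid.nat_pow_0[OF Rk_monoid] by (simp add: rkT_one)
next
  case (Suc n)
  then show ?case using monoid.nat_pow_Suc[OF Rk_monoid] by (simp add: rkT_mult mult.commute)
qed

lemma Rk_am: "abelian_monoid (Rk k :: (nat \<Rightarrow> 'a::field) ring)"
  using Rk_cring[where 'a='a] by (simp add: cring_def ring_def abelian_group_def)

lemma Rk_cm: "comm_monoid (Rk k :: (nat \<Rightarrow> 'a::field) ring)"
  using Rk_cring[where 'a='a] by (simp add: cring_def)

lemma rkT_finsum: "finite A \<Longrightarrow> finsum (Rk k) (\<lambda>i. rkT k (f i)) A = rkT k (\<Sum>i\<in>A. f i)"
proof (induction A rule: finite_induct)
  case empty
  then show ?case using abelian_monoid.finsum_empty[OF Rk_am]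
    by (simp add: rkT_zero)
next
  case (insert a A)
  show ?case using abelian_monoid.finsum_insert[OF Rk_am insert(1,2), of "\<lambda>i. rkT k (f i)"] insert
    by (simp add: Pi_def rkT_add)
qed

lemma rkT_finprod: "finite A \<Longrightarrow> finprod (Rk k) (\<lambda>i. rkT k (f i)) A = rkT k (\<Prod>i\<in>A. f i)"
proof (induction A rule: finite_induct)
  case empty
  then show ?case using comm_monoid.finprod_empty[OF Rk_cm]
    by (simp add: rkT_one)
next
  case (insert a A)
  show ?case using comm_monoid.finprod_insert[OF Rk_cm insert(1,2), of "\<lambda>i. rkT k (f i)"] insert
    by (simp add: Pi_def rkT_mult)
qed

lemma Rk_const_rkT: "Rk_const k c = rkT k (fps_const c)"
  by (auto simp: Rk_const_def rkT_def fun_eq_iff)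

lemma Rk_u_rkT: "Rk_u k = rkT k fps_X"
  by (auto simp: Rk_u_def rkT_def fun_eq_iff)

definition Sm :: "nat \<Rightarrow> ('a::field \<Rightarrow> 'a) \<Rightarrow> (nat \<Rightarrow> 'a) \<Rightarrow> (nat \<Rightarrow> 'a) \<Rightarrow> (nat \<Rightarrow> 'a)" where
  "Sm k \<theta> w x = finsum (Rk k) (\<lambda>i. Rk_const k (\<theta> (x i)) \<otimes>\<^bsub>Rk k\<^esub> (w [^]\<^bsub>Rk k\<^esub> i)) {..<k}"

lemma Sm_fps:
  assumes "w \<in> carrier (Rk k)"
  shows "Sm k \<theta> w x = rkT k (\<Sum>i<k. fps_const (\<theta> (x i)) * (Abs_fps w) ^ i)"
proof -
  have "Sm k \<theta> w x = finsum (Rk k) (\<lambda>i. rkT k (fps_const (\<theta> (x i)) * (Abs_fps w) ^ i)) {..<k}"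
    unfolding Sm_def
    by (subst rkT_E[OF assms, symmetric]) (simp add: Rk_const_rkT rkT_pow rkT_mult)
  then show ?thesis by (simp add: rkT_finsum)
qed

lemma Sm_compose:
  assumes "w \<in> carrier (Rk k)" "w 0 = 0"
  shows "Sm k \<theta> w x = rkT k (Abs_fps (\<theta> \<circ> x) oo Abs_fps w)"
proof -
  have V0: "Abs_fps w $ 0 = 0" using assms by simp
  show ?thesis unfolding Sm_fps[OF assms(1)] rkT_eq_iff
  proof (intro allI impI)
    fix n assume n: "n < k"
    have "(\<Sum>i<k. fps_const (\<theta> (x i)) * Abs_fps w ^ i) $ n = (\<Sum>i<k. \<theta> (x i) * (Abs_fps w ^ i) $ n)"
      by (simp add: fps_sum_nth)
    also have "\<dots> = (\<Sum>i\<in>{0..n}. \<theta> (x i) * (Abs_fps w ^ i) $ n)"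
      using n startsby_zero_power_prefix[OF V0]
      by (intro sum.mono_neutral_right) auto
    also have "\<dots> = (Abs_fps (\<theta> \<circ> x) oo Abs_fps w) $ n"
      by (simp add: fps_compose_nth)
    finally show "(\<Sum>i<k. fps_const (\<theta> (x i)) * Abs_fps w ^ i) $ n = (Abs_fps (\<theta> \<circ> x) oo Abs_fps w) $ n" .
  qed
qed

lemma rkT_compose_trunc: "rkT k (Abs_fps (rkT k F) oo V) = rkT k (F oo V)"
  unfolding rkT_eq_iff
  by (auto simp: fps_compose_nth rkT_def intro!: sum.cong)

lemma finite_carrier_Rk:
  assumes "finite (UNIV :: 'a set)"
  shows "finite (carrier (Rk k :: (nat \<Rightarrow> 'a::field) ring))"
proof -
  have "inj_on (\<lambda>a. restrict a {..<k}) (carrier (Rk k :: (nat \<Rightarrow> 'a) ring))"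
    by (auto simp: inj_on_def restrict_def fun_eq_iff) (metis not_less)
  moreover have "(\<lambda>a. restrict a {..<k}) ` (carrier (Rk k :: (nat \<Rightarrow> 'a) ring)) \<subseteq> PiE {..<k} (\<lambda>_. UNIV)"
    by (simp add: image_subset_iff)
  moreover have "finite (PiE {..<k} (\<lambda>_. UNIV :: 'a set))"
    using assms by (intro finite_PiE) auto
  ultimately show ?thesis
    by (metis finite_imageD finite_subset)
qed


lemma Sm_iso:
  fixes \<theta> :: "'a::field \<Rightarrow> 'a"
  assumes fin: "finite (UNIV::'a set)"
    and tm: "\<And>a b. \<theta> (a * b) = \<theta> a * \<theta> b" and ta: "\<And>a b. \<theta> (a + b) = \<theta> a + \<theta> b"
    and t1: "\<theta> 1 = 1" and ti: "inj \<theta>"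
    and w: "w \<in> carrier (Rk k)" and w0: "w 0 = 0" and w1: "2 \<le> k \<Longrightarrow> w 1 \<noteq> 0"
  shows "Sm k \<theta> w \<in> ring_iso (Rk k) (Rk k)"
proof -
  define V where "V = Abs_fps w"
  have V0: "V $ 0 = 0" using w0 by (simp add: V_def)
  have t0: "\<theta> 0 = 0" using ta[of 0 0] by (metis add.right_neutral add_left_cancel)
  have tsum: "\<theta> (sum f A) = (\<Sum>i\<in>A. \<theta> (f i))" for f :: "nat \<Rightarrow> 'a" and A
    by (induction A rule: infinite_finite_induct) (simp_all add: t0 ta)
  have tsub: "\<theta> (a - b) = \<theta> a - \<theta> b" for a b
    using ta[of "a - b" b] by (simp add: eq_diff_eq)
  have S: "Sm k \<theta> w x = rkT k (Abs_fps (\<theta> \<circ> x) oo V)" for x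
    using Sm_compose[OF w w0] by (simp add: V_def)
  show ?thesis
  proof (rule ring_iso_memI)
    fix x :: "nat \<Rightarrow> 'a" assume "x \<in> carrier (Rk k)"
    show "Sm k \<theta> w x \<in> carrier (Rk k)" by (simp add: S)
  next
    fix x y :: "nat \<Rightarrow> 'a" assume x: "x \<in> carrier (Rk k)" and y: "y \<in> carrier (Rk k)"
    have "\<theta> \<circ> (x \<otimes>\<^bsub>Rk k\<^esub> y) = rkT k (Abs_fps (\<theta> \<circ> x) * Abs_fps (\<theta> \<circ> y))"
      by (auto simp: fun_eq_iff mult_Rk rkT_def fps_mult_nth tsum tm t0 atLeast0AtMost)
    then have "Sm k \<theta> w (x \<otimes>\<^bsub>Rk k\<^esub> y) = rkT k ((Abs_fps (\<theta> \<circ> x) * Abs_fps (\<theta> \<circ> y)) oo V)"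
      by (simp add: S rkT_compose_trunc)
    also have "\<dots> = rkT k ((Abs_fps (\<theta> \<circ> x) oo V) * (Abs_fps (\<theta> \<circ> y) oo V))"
      by (simp add: fps_compose_mult_distrib[OF V0])
    also have "\<dots> = Sm k \<theta> w x \<otimes>\<^bsub>Rk k\<^esub> Sm k \<theta> w y"
      by (simp add: S rkT_mult)
    finally show "Sm k \<theta> w (x \<otimes>\<^bsub>Rk k\<^esub> y) = Sm k \<theta> w x \<otimes>\<^bsub>Rk k\<^esub> Sm k \<theta> w y" .
    have "Abs_fps (\<theta> \<circ> (x \<oplus>\<^bsub>Rk k\<^esub> y)) = Abs_fps (\<theta> \<circ> x) + Abs_fps (\<theta> \<circ> y)"
      by (simp add: fps_eq_iff add_Rk ta)
    then show "Sm k \<theta> w (x \<oplus>\<^bsub>Rk k\<^esub> y) = Sm k \<theta> w x \<oplus>\<^bsub>Rk k\<^esub> Sm k \<theta> w y"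
      by (simp add: S rkT_add fps_compose_add_distrib)
  next
    have "\<theta> \<circ> \<one>\<^bsub>Rk k\<^esub> = rkT k 1"
      by (auto simp: fun_eq_iff one_Rk rkT_def t0 t1)
    then show "Sm k \<theta> w \<one>\<^bsub>Rk k\<^esub> = \<one>\<^bsub>Rk k\<^esub>"
      by (simp add: S rkT_compose_trunc rkT_one)
  next
    have inj: "inj_on (Sm k \<theta> w) (carrier (Rk k))"
    proof (rule inj_onI, rule ccontr)
      fix x y :: "nat \<Rightarrow> 'a" assume x: "x \<in> carrier (Rk k)" and y: "y \<in> carrier (Rk k)"
        and eq: "Sm k \<theta> w x = Sm k \<theta> w y" and ne: "x \<noteq> y"
      define d where "d = (\<lambda>i. x i - y i)"
      have "\<exists>n. d n \<noteq> 0" using ne by (auto simp: d_def fun_eq_iff)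
      define n where "n = (LEAST n. d n \<noteq> 0)"
      have dn: "d n \<noteq> 0" unfolding n_def by (rule LeastI_ex) fact
      have dlt: "d i = 0" if "i < n" for i
        using not_less_Least[OF that[unfolded n_def]] by simp
      have nk: "n < k"
      proof (rule ccontr)
        assume "\<not> n < k"
        then show False using x y dn by (auto simp: d_def)
      qed
      have "(Abs_fps (\<theta> \<circ> x) oo V) $ n = (Abs_fps (\<theta> \<circ> y) oo V) $ n"
        using eq nk by (simp add: S rkT_eq_iff)
      then have "0 = (Abs_fps (\<theta> \<circ> x) oo V) $ n - (Abs_fps (\<theta> \<circ> y) oo V) $ n" by simp
      also have "\<dots> = (\<Sum>i=0..n. \<theta> (d i) * (V ^ i) $ n)"
        by (simp add: fps_compose_nth d_def tsub algebra_simps sum_subtractf)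
      also have "\<dots> = (\<Sum>i\<in>{0..<n}. \<theta> (d i) * (V ^ i) $ n) + \<theta> (d n) * (V ^ n) $ n"
        by (simp add: atLeastLessThanSuc_atLeastAtMost[symmetric])
      also have "(\<Sum>i\<in>{0..<n}. \<theta> (d i) * (V ^ i) $ n) = 0"
        by (simp add: dlt t0)
      also have "(V ^ n) $ n = (w 1) ^ n"
        using startsby_zero_power_nth_same[OF V0] by (simp add: V_def)
      finally have "\<theta> (d n) * (w 1) ^ n = 0" by simp
      moreover have "\<theta> (d n) \<noteq> 0" using dn ti t0 by (metis injD)
      moreover have "(w 1) ^ n \<noteq> 0"
      proof (cases "n = 0")
        case False
        then have "2 \<le> k" using nk by simp
        then show ?thesis using w1 by simp
      qed simp
      ultimately show False by simp
    qed
    moreover have "Sm k \<theta> w ` carrier (Rk k) \<subseteq> carrier (Rk k)"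
      by (auto simp: S)
    ultimately show "bij_betw (Sm k \<theta> w) (carrier (Rk k)) (carrier (Rk k))"
      using endo_inj_surj[OF finite_carrier_Rk[OF fin]] by (simp add: bij_betw_def)
  qed
qed


lemma fps_prod_nth_0: "(\<Prod>j\<in>A. f j) $ 0 = (\<Prod>j\<in>A. f j $ 0)"
  by (induction A rule: infinite_finite_induct) simp_all

lemma Rk_eta_rkT: "\<one>\<^bsub>Rk k\<^esub> \<oplus>\<^bsub>Rk k\<^esub> (Rk_const k c \<otimes>\<^bsub>Rk k\<^esub> (Rk_u k [^]\<^bsub>Rk k\<^esub> (n::nat)))
      = rkT k (1 + fps_const c * fps_X ^ n)"
  by (simp add: rkT_one Rk_const_rkT Rk_u_rkT rkT_pow rkT_mult rkT_add)

lemma Fring_iso_props: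
  assumes "\<theta> \<in> ring_iso Fring Fring"
  shows "(\<forall>a b. \<theta> (a * b) = \<theta> a * \<theta> b) \<and> (\<forall>a b. \<theta> (a + b) = \<theta> a + \<theta> b) \<and>
    \<theta> 1 = 1 \<and> inj \<theta>"
  using assms by (auto simp: ring_iso_def ring_hom_def Fring_def bij_betw_def)

lemma Theta_Sm:
  fixes \<theta> :: "'a::field \<Rightarrow> 'a"
  assumes adm: "admissible k \<theta> \<eta>" and k: "1 \<le> k"
  shows "\<exists>w. w \<in> carrier (Rk k) \<and> w 0 = 0 \<and> (2 \<le> k \<longrightarrow> w 1 \<noteq> 0) \<and>
             (\<forall>x. Theta k \<theta> \<eta> x = Sm k \<theta> w x)"
proof -
  obtain e where e: "e \<noteq> 0" "\<eta> 1 = Rk_const k e" using adm by (auto simp: admissible_def)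
  have etai: "\<exists>c. \<eta> i = rkT k (1 + fps_const c * fps_X ^ (i - 1))" if "2 \<le> i" "i \<le> k - 1" for i
    using adm that by (auto simp: admissible_def Rk_eta_rkT)
  have cn: "\<eta> j \<in> carrier (Rk k) \<and> \<eta> j 0 \<noteq> 0" if "j \<in> {1..k-1}" for j
  proof (cases "j = 1")
    case True
    then show ?thesis using e k by (auto simp: Rk_const_rkT rkT_def)
  next
    case False
    then have j: "2 \<le> j \<and> j \<le> k - 1" using that by auto
    then obtain c where c: "\<eta> j = rkT k (1 + fps_const c * fps_X ^ (j - 1))" using etai by blast
    show ?thesis using j k by (simp add: c rkT_def)
  qed
  have carr: "\<eta> j \<in> carrier (Rk k)" and nz: "\<eta> j 0 \<noteq> 0" if "j \<in> {1..k-1}" for j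
    using cn[OF that] by auto
  define Pf where "Pf = (\<Prod>j\<in>{1..k-1}. Abs_fps (\<eta> j))"
  have P: "finprod (Rk k) \<eta> {1..k-1} = rkT k Pf"
  proof -
    have "finprod (Rk k) \<eta> {1..k-1} = finprod (Rk k) (\<lambda>j. rkT k (Abs_fps (\<eta> j))) {1..k-1}"
      by (intro comm_monoid.finprod_cong'[OF Rk_cm]) (use carr in \<open>auto simp: rkT_E[OF carr]\<close>)
    then show ?thesis by (simp add: rkT_finprod Pf_def)
  qed
  have Pf0: "Pf $ 0 \<noteq> 0"
    unfolding Pf_def fps_prod_nth_0 using nz by (simp add: prod_zero_iff)
  define w where "w = rkT k (Pf * fps_X)"
  have "w \<in> carrier (Rk k)" by (simp add: w_def)
  moreover have "w 0 = 0" using k by (simp add: w_def rkT_def)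
  moreover have "2 \<le> k \<longrightarrow> w 1 \<noteq> 0" using Pf0 by (simp add: w_def rkT_def mult.commute)
  moreover have "Theta k \<theta> \<eta> x = Sm k \<theta> w x" for x
  proof -
    have "Theta k \<theta> \<eta> x = finsum (Rk k) (\<lambda>i. rkT k (fps_const (\<theta> (x i)) * Pf ^ i * fps_X ^ i)) {..<k}"
      unfolding Theta_def Let_def P by (simp add: Rk_const_rkT Rk_u_rkT rkT_pow rkT_mult)
    also have "\<dots> = rkT k (\<Sum>i<k. fps_const (\<theta> (x i)) * (Pf * fps_X) ^ i)"
      by (simp add: rkT_finsum power_mult_distrib mult.assoc)
    also have "\<dots> = Sm k \<theta> w x"
      by (simp add: Sm_def w_def Rk_const_rkT rkT_pow rkT_mult rkT_finsum)
    finally show ?thesis .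
  qed
  ultimately show ?thesis by blast
qed

lemma dir1:
  fixes \<theta> :: "'a::{finite,field} \<Rightarrow> 'a"
  assumes adm: "admissible k \<theta> \<eta>" and k: "1 \<le> k"
  shows "Theta k \<theta> \<eta> \<in> ring_iso (Rk k) (Rk k)"
proof -
  obtain w where w: "w \<in> carrier (Rk k)" "w 0 = 0" "2 \<le> k \<longrightarrow> w 1 \<noteq> 0"
    and eq: "\<And>x. Theta k \<theta> \<eta> x = Sm k \<theta> w x"
    using Theta_Sm[OF adm k] by blast
  have th: "\<theta> \<in> ring_iso Fring Fring" using adm by (simp add: admissible_def)
  have "Theta k \<theta> \<eta> = Sm k \<theta> w" using eq by (simp add: fun_eq_iff)
  then show ?thesis
    using Sm_iso[of \<theta> w k] Fring_iso_props[OF th] w by simp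
qed


lemma ff_pow_card:
  fixes x :: "'a :: {finite,field}"
  shows "x ^ card (UNIV :: 'a set) = x"
proof (cases "x = 0")
  case False
  have "x * (\<Prod>y\<in>UNIV-{0}. x * y) = x * x ^ (card (UNIV :: 'a set) - 1) * \<Prod>(UNIV-{0})"
    by (simp add: prod.distrib mult_ac)
  also have "x * x ^ (card (UNIV :: 'a set) - 1) = x ^ Suc (card (UNIV :: 'a set) - 1)"
    by (subst power_Suc) auto
  also have "Suc (card (UNIV :: 'a set) - 1) = card (UNIV :: 'a set)"
    using finite_UNIV_card_ge_0[where ?'a = 'a] by simp
  also have "(\<Prod>y\<in>UNIV-{0}. x * y) = (\<Prod>y\<in>UNIV-{0}. y)"
    by (rule prod.reindex_bij_witness[of _ "\<lambda>y. y / x" "\<lambda>y. x * y"]) (use False in auto)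
  finally show ?thesis
    by simp
qed (use finite_UNIV_card_ge_0[where ?'a = 'a] in auto)

lemma ff_pow_card_pow:
  fixes x :: "'a :: {finite,field}"
  shows "x ^ (card (UNIV :: 'a set) ^ n) = x"
  by (induction n) (simp_all add: ff_pow_card power_mult)

lemma ff_CHAR:
  assumes p: "Factorial_Ring.prime (p::nat)" and m: "m \<ge> 1" and c: "card (UNIV :: 'a::{finite,field} set) = p ^ m"
  shows "CHAR('a) = p"
proof -
  have pos: "CHAR('a) > 0" by (rule finite_imp_CHAR_pos) simp
  have pr: "Factorial_Ring.prime CHAR('a)" by (rule prime_CHAR_semidom[OF pos])
  have "CHAR('a) dvd p ^ m" using CHAR_dvd_CARD[where 'a='a] c by simp
  then have "CHAR('a) dvd p" using prime_dvd_power[OF pr] by blast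
  then show ?thesis using primes_dvd_imp_eq[OF pr p] by blast
qed

lemma fps_frob:
  fixes F :: "'a::{finite,field} fps"
  assumes p: "Factorial_Ring.prime (p::nat)" and m: "m \<ge> 1" and c: "card (UNIV :: 'a set) = p ^ m"
  shows "(F + G) ^ (card (UNIV :: 'a set) ^ n) = F ^ (card (UNIV :: 'a set) ^ n) + G ^ (card (UNIV :: 'a set) ^ n)"
proof -
  have ch: "CHAR('a fps) = p" using ff_CHAR[OF p m c] by simp
  have "card (UNIV :: 'a set) ^ n = CHAR('a fps) ^ (m * n)" using c ch by (simp add: power_mult)
  moreover have "Factorial_Ring.prime CHAR('a fps)" using ch p by simp
  ultimately show ?thesis using freshmans_dream'[where 'a="'a fps"] by metis
qed

lemma k_le_pow:
  assumes "Factorial_Ring.prime (p::nat)" "m \<ge> 1" "card (UNIV :: 'a set) = p ^ m"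
  shows "k < card (UNIV :: 'a set) ^ k"
proof -
  have p2: "2 \<le> p" using prime_ge_2_nat[OF assms(1)] .
  have "p ^ 1 \<le> p ^ m" by (rule power_increasing) (use assms(2) p2 in auto)
  then have "2 \<le> card (UNIV :: 'a set)" using p2 assms(3) by simp
  then have "2 ^ k \<le> card (UNIV :: 'a set) ^ k" by (rule power_mono) simp
  moreover have "k < 2 ^ k" by (rule less_exp)
  ultimately show ?thesis by linarith
qed


lemma eta_exists:
  fixes W :: "'a::field fps"
  assumes W0: "W $ 0 \<noteq> 0"
  shows "\<exists>g::nat \<Rightarrow> 'a fps. (\<exists>e. e \<noteq> 0 \<and> g 1 = fps_const e) \<and>
     (\<forall>i. 2 \<le> i \<and> i \<le> n \<longrightarrow> (\<exists>c. g i = 1 + fps_const c * fps_X ^ (i - 1))) \<and>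
     (\<forall>j<n. (\<Prod>i\<in>{1..n}. g i) $ j = W $ j)"
proof (induction n)
  case 0
  show ?case by (intro exI[of _ "\<lambda>_. fps_const 1"]) auto
next
  case (Suc n)
  then obtain g where g1: "\<exists>e. e \<noteq> 0 \<and> g 1 = fps_const e"
    and gi: "\<forall>i. 2 \<le> i \<and> i \<le> n \<longrightarrow> (\<exists>c. g i = 1 + fps_const c * fps_X ^ (i - 1))"
    and gp: "\<forall>j<n. (\<Prod>i\<in>{1..n}. g i) $ j = W $ j" by blast
  show ?case
  proof (cases "n = 0")
    case True
    show ?thesis
      by (intro exI[of _ "g(1 := fps_const (W $ 0))"]) (use True W0 in auto)
  next
    case False
    define Q where "Q = (\<Prod>i\<in>{1..n}. g i)"
    have Q0: "Q $ 0 = W $ 0" using gp False by (simp add: Q_def)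
    define c where "c = (W $ n - Q $ n) / Q $ 0"
    define g' where "g' = g(Suc n := 1 + fps_const c * fps_X ^ n)"
    have "(\<Prod>i\<in>{1..Suc n}. g' i) = (\<Prod>i\<in>{1..n}. g' i) * g' (Suc n)"
      by (simp add: atLeastAtMostSuc_conv mult.commute)
    also have "(\<Prod>i\<in>{1..n}. g' i) = Q" unfolding Q_def g'_def by (intro prod.cong) auto
    finally have P: "(\<Prod>i\<in>{1..Suc n}. g' i) = Q * (1 + fps_const c * fps_X ^ n)"
      by (simp add: g'_def)
    show ?thesis
    proof (intro exI[of _ g'] conjI allI impI)
      show "\<exists>e. e \<noteq> 0 \<and> g' 1 = fps_const e" using g1 False by (simp add: g'_def)
    next
      fix i assume i: "2 \<le> i \<and> i \<le> Suc n"
      show "\<exists>c. g' i = 1 + fps_const c * fps_X ^ (i - 1)"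
      proof (cases "i = Suc n")
        case True then show ?thesis by (auto simp: g'_def)
      next
        case False then show ?thesis using gi i by (auto simp: g'_def)
      qed
    next
      fix j assume j: "j < Suc n"
      have "(Q * (1 + fps_const c * fps_X ^ n)) $ j = Q $ j + c * (if j < n then 0 else Q $ (j - n))"
        by (simp add: distrib_left fps_X_power_mult_right_nth mult.left_commute[of Q])
      also have "\<dots> = W $ j"
      proof (cases "j < n")
        case True then show ?thesis using gp by (simp add: Q_def)
      next
        case False
        then have "j = n" using j by simp
        then show ?thesis using Q0 W0 by (simp add: c_def)
      qed
      finally show "(\<Prod>i\<in>{1..Suc n}. g' i) $ j = W $ j" using P by simp
    qed
  qed
qed


lemma Rk_iso_cong:
  fixes f h :: "(nat \<Rightarrow> 'a::field) \<Rightarrow> (nat \<Rightarrow> 'a)"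
  assumes h: "h \<in> ring_iso (Rk k) (Rk k)"
    and eq: "\<And>x. x \<in> carrier (Rk k) \<Longrightarrow> f x = h x"
  shows "f \<in> ring_iso (Rk k) (Rk k)"
proof -
  have hom: "h \<in> ring_hom (Rk k) (Rk k)" and bij: "bij_betw h (carrier (Rk k)) (carrier (Rk k))"
    using h by (auto simp: ring_iso_def)
  show ?thesis
  proof (rule ring_iso_memI)
    fix x :: "nat \<Rightarrow> 'a" assume "x \<in> carrier (Rk k)"
    then show "f x \<in> carrier (Rk k)" using eq ring_hom_closed[OF hom] by simp
  next
    fix x y :: "nat \<Rightarrow> 'a" assume x: "x \<in> carrier (Rk k)" and y: "y \<in> carrier (Rk k)"
    have m: "x \<otimes>\<^bsub>Rk k\<^esub> y \<in> carrier (Rk k)" using monoid.m_closed[OF Rk_monoid x y] .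
    have a: "x \<oplus>\<^bsub>Rk k\<^esub> y \<in> carrier (Rk k)" using abelian_monoid.a_closed[OF Rk_am x y] .
    show "f (x \<otimes>\<^bsub>Rk k\<^esub> y) = f x \<otimes>\<^bsub>Rk k\<^esub> f y"
      using eq[OF m] eq[OF x] eq[OF y] ring_hom_mult[OF hom x y] by simp
    show "f (x \<oplus>\<^bsub>Rk k\<^esub> y) = f x \<oplus>\<^bsub>Rk k\<^esub> f y"
      using eq[OF a] eq[OF x] eq[OF y] ring_hom_add[OF hom x y] by simp
  next
    show "f \<one>\<^bsub>Rk k\<^esub> = \<one>\<^bsub>Rk k\<^esub>"
      using eq[OF monoid.one_closed[OF Rk_monoid]] ring_hom_one[OF hom] by simp
  next
    show "bij_betw f (carrier (Rk k)) (carrier (Rk k))"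
      using bij bij_betw_cong[of "carrier (Rk k)" f h] eq by blast
  qed
qed

lemma Rk_const_inj: "1 \<le> k \<Longrightarrow> Rk_const k a = Rk_const k b \<Longrightarrow> a = b"
  by (drule fun_cong[of _ _ 0]) (simp add: Rk_const_def)

lemma Rk_const_carrier [simp]: "Rk_const k c \<in> carrier (Rk k)"
  by (simp only: Rk_const_rkT rkT_carrier)

lemma Rk_u_carrier [simp]: "Rk_u k \<in> carrier (Rk k)"
  by (simp only: Rk_u_rkT rkT_carrier)

lemma Rk_decomp:
  assumes "x \<in> carrier (Rk k)"
  shows "Sm k id (Rk_u k) x = x"
proof -
  have "Sm k id (Rk_u k) x = rkT k (\<Sum>i<k. fps_const (x i) * fps_X ^ i)"
    by (simp add: Sm_def Rk_u_rkT Rk_const_rkT rkT_pow rkT_mult rkT_finsum)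
  also have "\<dots> = x"
  proof -
    have "(\<Sum>i<k. x i * (if n = i then 1 else 0)) = (\<Sum>i<k. if n = i then x i else 0)" for n
      by (rule sum.cong) auto
    then show ?thesis using assms by (auto simp: rkT_def fun_eq_iff fps_sum_nth)
  qed
  finally show ?thesis .
qed

lemma Theta_Sm_g:
  "Theta k \<theta> (\<lambda>i. rkT k (g i)) x = Sm k \<theta> (rkT k ((\<Prod>i\<in>{1..k-1}. g i) * fps_X)) x"
proof -
  define Pf where "Pf = (\<Prod>i\<in>{1..k-1}. g i)"
  have P: "finprod (Rk k) (\<lambda>i. rkT k (g i)) {1..k-1} = rkT k Pf"
    by (simp add: rkT_finprod Pf_def)
  have "Theta k \<theta> (\<lambda>i. rkT k (g i)) x = finsum (Rk k) (\<lambda>i. rkT k (fps_const (\<theta> (x i)) * Pf ^ i * fps_X ^ i)) {..<k}"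
    unfolding Theta_def Let_def P by (simp add: Rk_const_rkT Rk_u_rkT rkT_pow rkT_mult)
  also have "\<dots> = rkT k (\<Sum>i<k. fps_const (\<theta> (x i)) * (Pf * fps_X) ^ i)"
    by (simp add: rkT_finsum power_mult_distrib mult.assoc)
  also have "\<dots> = Sm k \<theta> (rkT k (Pf * fps_X)) x"
    by (simp add: Sm_def Rk_const_rkT rkT_pow rkT_mult rkT_finsum)
  finally show ?thesis by (simp add: Pf_def)
qed


lemma dir2:
  fixes \<sigma> :: "(nat \<Rightarrow> 'a::{finite,field}) \<Rightarrow> (nat \<Rightarrow> 'a)"
  assumes p: "Factorial_Ring.prime (p::nat)" and m: "m \<ge> 1" and card: "card (UNIV :: 'a set) = p ^ m"
    and k: "1 \<le> k" and sig: "\<sigma> \<in> ring_iso (Rk k) (Rk k)"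
  shows "\<exists>\<theta> \<eta>. admissible k \<theta> \<eta> \<and> (\<forall>x\<in>carrier (Rk k). \<sigma> x = Theta k \<theta> \<eta> x)"
proof -
  have hom: "\<sigma> \<in> ring_hom (Rk k) (Rk k)" and bij: "bij_betw \<sigma> (carrier (Rk k)) (carrier (Rk k))"
    using sig by (auto simp: ring_iso_def)
  interpret H: ring_hom_cring "Rk k :: (nat \<Rightarrow> 'a) ring" "Rk k :: (nat \<Rightarrow> 'a) ring" \<sigma>
    by (intro ring_hom_cring.intro ring_hom_cring_axioms.intro Rk_cring hom)
  define q where "q = card (UNIV :: 'a set)"
  have cst0: "\<sigma> (Rk_const k c) = Rk_const k (\<sigma> (Rk_const k c) 0)" for c
  proof -
    define y where "y = \<sigma> (Rk_const k c)"
    have yc: "y \<in> carrier (Rk k)" by (simp only: y_def H.hom_closed Rk_const_carrier)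
    have "Rk_const k c [^]\<^bsub>Rk k\<^esub> (q ^ k) = Rk_const k c"
      by (simp add: Rk_const_rkT rkT_pow fps_const_power q_def ff_pow_card_pow)
    then have "y [^]\<^bsub>Rk k\<^esub> (q ^ k) = y"
      using H.hom_pow[OF Rk_const_carrier, of c "q ^ k"] unfolding y_def by metis
    then have yy: "rkT k (Abs_fps y ^ (q ^ k)) = y"
      using rkT_E[OF yc] rkT_pow by metis
    define N where "N = Abs_fps y - fps_const (y 0)"
    have N0: "N $ 0 = 0" by (simp add: N_def)
    have F: "Abs_fps y = fps_const (y 0) + N" by (simp add: N_def)
    have Fq: "Abs_fps y ^ (q ^ k) = fps_const (y 0) ^ (q ^ k) + N ^ (q ^ k)"
      unfolding F q_def by (rule fps_frob[OF p m card])
    have kq: "k < q ^ k" unfolding q_def by (rule k_le_pow[OF p m card])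
    show ?thesis unfolding y_def[symmetric]
    proof (rule ext)
      fix i
      show "y i = Rk_const k (y 0) i"
      proof (cases "i = 0")
        case True then show ?thesis using k by (simp add: Rk_const_def)
      next
        case False
        show ?thesis
        proof (cases "i < k")
          case True
          have "y i = (Abs_fps y ^ (q ^ k)) $ i" using yy True by (metis rkT_def)
          also have "\<dots> = 0" using False True kq startsby_zero_power_prefix[OF N0, of "q ^ k"]
            by (simp add: Fq fps_const_power)
          finally show ?thesis using False by (simp add: Rk_const_def)
        next
          case False then show ?thesis using yc by (simp add: Rk_const_def)
        qed
      qed
    qed
  qed
  define \<theta> where "\<theta> c = \<sigma> (Rk_const k c) 0" for c
  have cst: "\<sigma> (Rk_const k c) = Rk_const k (\<theta> c)" for c
    using cst0 by (simp add: \<theta>_def)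
  have cmult: "Rk_const k (a * b) = Rk_const k a \<otimes>\<^bsub>Rk k\<^esub> Rk_const k b" for a b :: 'a
    by (simp add: Rk_const_rkT rkT_mult fps_const_mult)
  have cadd: "Rk_const k (a + b) = Rk_const k a \<oplus>\<^bsub>Rk k\<^esub> Rk_const k b" for a b :: 'a
    by (simp add: Rk_const_rkT rkT_add fps_const_add)
  have cone: "\<one>\<^bsub>Rk k\<^esub> = Rk_const k (1::'a)"
    by (simp add: one_Rk Rk_const_def)
  have tm: "\<theta> (a * b) = \<theta> a * \<theta> b" for a b
    by (rule Rk_const_inj[OF k]) (simp add: cmult cst[symmetric] H.hom_mult[OF Rk_const_carrier Rk_const_carrier])
  have ta: "\<theta> (a + b) = \<theta> a + \<theta> b" for a b
    by (rule Rk_const_inj[OF k]) (simp add: cadd cst[symmetric] H.hom_add[OF Rk_const_carrier Rk_const_carrier])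
  have t1: "\<theta> 1 = 1"
    by (rule Rk_const_inj[OF k]) (simp add: cst[symmetric] cone[symmetric])
  have ti: "inj \<theta>"
  proof (rule injI)
    fix a b assume "\<theta> a = \<theta> b"
    then have "\<sigma> (Rk_const k a) = \<sigma> (Rk_const k b)" by (simp add: cst)
    then have "Rk_const k a = Rk_const k b"
      using bij Rk_const_carrier[of k a] Rk_const_carrier[of k b] unfolding bij_betw_def inj_on_def by blast
    then show "a = b" by (rule Rk_const_inj[OF k])
  qed
  have th: "\<theta> \<in> ring_iso Fring Fring"
  proof (rule ring_iso_memI)
    show "bij_betw \<theta> (carrier Fring) (carrier Fring)"
      using ti finite_UNIV_inj_surj[of \<theta>] by (simp add: Fring_def bij_betw_def)
  qed (simp_all add: Fring_def tm ta t1)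
  define v where "v = \<sigma> (Rk_u k)"
  have vc: "v \<in> carrier (Rk k)" by (simp only: v_def H.hom_closed Rk_u_carrier)
  have "Rk_u k [^]\<^bsub>Rk k\<^esub> k = \<zero>\<^bsub>Rk k\<^esub>"
    by (simp add: Rk_u_rkT rkT_pow rkT_zero rkT_eq_iff)
  then have "v [^]\<^bsub>Rk k\<^esub> k = \<zero>\<^bsub>Rk k\<^esub>"
    using H.hom_pow[OF Rk_u_carrier, of k] H.hom_zero unfolding v_def by metis
  then have "rkT k (Abs_fps v ^ k) = rkT k 0"
    using rkT_E[OF vc] rkT_pow rkT_zero by metis
  then have "(Abs_fps v ^ k) $ 0 = 0" using k by (simp add: rkT_eq_iff)
  then have v0: "v 0 = 0" using k by (simp add: fps_power_zeroth)
  have sig_Sm: "\<sigma> x = Sm k \<theta> v x" if x: "x \<in> carrier (Rk k)" for x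
  proof -
    have "\<sigma> x = \<sigma> (Sm k id (Rk_u k) x)" using Rk_decomp[OF x] by simp
    also have "\<dots> = Sm k \<theta> v x"
      unfolding Sm_def
      by (subst H.hom_finsum)
         (auto simp: Pi_def monoid.m_closed[OF Rk_monoid] monoid.nat_pow_closed[OF Rk_monoid]
            H.hom_pow cst v_def o_def simp del: carrier_Rk)
    finally show ?thesis .
  qed
  have v1: "v 1 \<noteq> 0" if k2: "2 \<le> k"
  proof
    assume v1: "v 1 = 0"
    obtain y where y: "y \<in> carrier (Rk k)" "\<sigma> y = Rk_u k"
      using bij Rk_u_carrier by (metis bij_betw_iff_bijections)
    have "Rk_u k = rkT k (Abs_fps (\<theta> \<circ> y) oo Abs_fps v)"
      using y sig_Sm Sm_compose[OF vc v0] by metis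
    then have "Rk_u k 1 = (Abs_fps (\<theta> \<circ> y) oo Abs_fps v) $ 1"
      using k2 by (simp add: rkT_def)
    also have "\<dots> = 0" using v0 v1 by (simp add: fps_compose_nth numeral_2_eq_2)
    finally show False using k2 by (simp add: Rk_u_def)
  qed
  define W where "W = (if 2 \<le> k then Abs_fps (\<lambda>j. v (Suc j)) else (1 :: 'a fps))"
  have W0: "W $ 0 \<noteq> 0" using v1 by (simp add: W_def)
  obtain g where g1: "\<exists>e. e \<noteq> 0 \<and> g 1 = fps_const e"
    and gi: "\<forall>i. 2 \<le> i \<and> i \<le> k - 1 \<longrightarrow> (\<exists>c. g i = 1 + fps_const c * fps_X ^ (i - 1))"
    and gp: "\<forall>j<k - 1. (\<Prod>i\<in>{1..k - 1}. g i) $ j = W $ j"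
    using eta_exists[OF W0, of "k - 1"] by blast
  define \<eta> where "\<eta> = (\<lambda>i. rkT k (g i))"
  have adm: "admissible k \<theta> \<eta>"
    unfolding admissible_def
  proof (intro conjI th allI impI)
    show "\<exists>e. e \<noteq> 0 \<and> \<eta> 1 = Rk_const k e" using g1 by (auto simp: \<eta>_def Rk_const_rkT)
  next
    fix i assume "2 \<le> i \<and> i \<le> k - 1"
    then obtain c where "g i = 1 + fps_const c * fps_X ^ (i - 1)" using gi by blast
    then show "\<exists>c. \<eta> i = \<one>\<^bsub>Rk k\<^esub> \<oplus>\<^bsub>Rk k\<^esub> Rk_const k c \<otimes>\<^bsub>Rk k\<^esub> Rk_u k [^]\<^bsub>Rk k\<^esub> (i - 1)"
      by (auto simp: \<eta>_def Rk_eta_rkT)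
  qed
  define Pf where "Pf = (\<Prod>i\<in>{1..k - 1}. g i)"
  have vP: "v = rkT k (Pf * fps_X)"
  proof -
    have "rkT k (Abs_fps v) = rkT k (Pf * fps_X)"
      unfolding rkT_eq_iff
    proof (intro allI impI)
      fix n assume n: "n < k"
      show "Abs_fps v $ n = (Pf * fps_X) $ n"
      proof (cases "n = 0")
        case True then show ?thesis using v0 by (simp add: mult.commute)
      next
        case False
        then have "2 \<le> k" "n - 1 < k - 1" using n by auto
        then show ?thesis using gp False by (simp add: mult.commute Pf_def W_def)
      qed
    qed
    then show ?thesis using rkT_E[OF vc] by simp
  qed
  have "\<forall>x\<in>carrier (Rk k). \<sigma> x = Theta k \<theta> \<eta> x"
    using sig_Sm Theta_Sm_g[of k \<theta> g] by (simp add: \<eta>_def vP Pf_def)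
  then show ?thesis using adm by blast
qed


theorem lemma3p1:
  fixes p m k :: nat
  assumes "Factorial_Ring.prime p" and "m \<ge> 1" and "k \<ge> 1"
    and "card (UNIV :: 'a set) = p ^ m"
  shows "(\<forall>\<theta> \<eta>. admissible k (\<theta> :: 'a::{finite,field} \<Rightarrow> 'a) \<eta> \<longrightarrow>
             Theta k \<theta> \<eta> \<in> ring_iso (Rk k) (Rk k))
       \<and> (\<forall>\<sigma>. \<sigma> \<in> ring_iso (Rk k :: (nat \<Rightarrow> 'a) ring) (Rk k) \<longleftrightarrow>
             (\<exists>\<theta> \<eta>. admissible k \<theta> \<eta> \<and>
                 (\<forall>x \<in> carrier (Rk k). \<sigma> x = Theta k \<theta> \<eta> x)))"
proof -
  have d1: "\<forall>\<theta> \<eta>. admissible k (\<theta> :: 'a \<Rightarrow> 'a) \<eta> \<longrightarrow> Theta k \<theta> \<eta> \<in> ring_iso (Rk k) (Rk k)"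
    using dir1 assms(3) by blast
  have d2: "\<forall>\<sigma>. \<sigma> \<in> ring_iso (Rk k :: (nat \<Rightarrow> 'a) ring) (Rk k) \<longleftrightarrow>
             (\<exists>\<theta> \<eta>. admissible k \<theta> \<eta> \<and> (\<forall>x \<in> carrier (Rk k). \<sigma> x = Theta k \<theta> \<eta> x))"
  proof (intro allI iffI)
    fix \<sigma> :: "(nat \<Rightarrow> 'a) \<Rightarrow> (nat \<Rightarrow> 'a)"
    assume "\<sigma> \<in> ring_iso (Rk k) (Rk k)"
    then show "\<exists>\<theta> \<eta>. admissible k \<theta> \<eta> \<and> (\<forall>x \<in> carrier (Rk k). \<sigma> x = Theta k \<theta> \<eta> x)"
      by (rule dir2[OF assms(1,2,4,3)])
  next
    fix \<sigma> :: "(nat \<Rightarrow> 'a) \<Rightarrow> (nat \<Rightarrow> 'a)"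
    assume "\<exists>\<theta> \<eta>. admissible k \<theta> \<eta> \<and> (\<forall>x \<in> carrier (Rk k). \<sigma> x = Theta k \<theta> \<eta> x)"
    then obtain \<theta> \<eta> where adm: "admissible k \<theta> \<eta>" and eq: "\<forall>x \<in> carrier (Rk k). \<sigma> x = Theta k \<theta> \<eta> x"
      by blast
    show "\<sigma> \<in> ring_iso (Rk k) (Rk k)"
      using Rk_iso_cong[OF dir1[OF adm assms(3)]] eq by blast
  qed
  show ?thesis using d1 d2 by blast
qed

end
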